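(* Let $p,q,k$ be nonnegative integers with $q<n$ and $k<n-q+1$. Then there exists a unique homogeneous polynomial $f_{k,p,q}=f_{k,p,q}(\underline{x}^2,\underline{\theta}^2)$ of total degree $k$ in $\underline{x}^2$ and $\underline{\theta}^2$, i.e. $f_{k,p,q}=\sum_{i=0}^k a_i\,\underline{x}^{2k-2i}\underline{\theta}^{2i}$ with $a_i\in\mathbb{R}$, such that $f_{k,p,q}\,\mathcal{H}_p^b\otimes\mathcal{H}_q^f\neq 0$, \[ \Delta\big(f_{k,p,q}\,\mathcal{H}_p^b\otimes\mathcal{H}_q^f\big)=0, \] and the coefficient of $\underline{x}^{2k}$ in $f_{k,p,q}$ equals $\dfrac{(n-q)!}{\Gamma(\frac m2+p+k)}$.
   Context: Let $m,n\ge 0$ be integers. Let $\mathcal{P}=\mathbb{R}[x_1,\dots,x_m]\otimes\Lambda_{2n}$ be the real algebra generated by commuting variables $x_1,\dots,x_m$ and anticommuting (Grassmann) variables $\theta_1,\dots,\theta_{2n}$, with $x_i\theta_j=\theta_jx_i$; $\partial_{\theta_j}$ is the Grassmann derivative. Super Laplace operator: $\Delta=\Delta_b+\Delta_f$ with $\Delta_b=-\sum_{j=1}^m\partial_{x_j}^2$ and $\Delta_f=4\sum_{j=1}^n\partial_{\theta_{2j-1}}\partial_{\theta_{2j}}$. Set $\underline{x}^2=-\sum_{j=1}^m x_j^2$, $\underline{\theta}^2=\sum_{j=1}^n\theta_{2j-1}\theta_{2j}$, with powers $\underline{x}^{2a}=(\underline{x}^2)^a$, $\underline{\theta}^{2a}=(\underline{\theta}^2)^a$.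 $\mathcal{H}_p^b$ is the space of polynomials in $x_1,\dots,x_m$ homogeneous of degree $p$ annihilated by $\Delta_b$; $\mathcal{H}_q^f$ is the space of elements of $\Lambda_{2n}$ homogeneous of degree $q$ annihilated by $\Delta_f$. For $f\in\mathcal{P}$, $f\,\mathcal{H}_p^b\otimes\mathcal{H}_q^f$ denotes the linear span of all products $f\,h\,g$ with $h\in\mathcal{H}_p^b$, $g\in\mathcal{H}_q^f$. *)

theory Defs
  imports "HOL-Analysis.Analysis"
begin

text \<open>Model of P = R[x_1..x_m] (x) Lambda_{2n}.  An element is a coefficient function
  F alpha S, the coefficient of the basis monomial x^alpha theta_S, where alpha is an exponent
  vector (alpha i = exponent of x_i, i = 1..m) and S a subset of {1..2n}; theta_S denotes the
  product of the theta_s, s in S, in increasing order of indices.\<close>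

type_synonym spoly = "(nat \<Rightarrow> nat) \<Rightarrow> nat set \<Rightarrow> real"

definition szero :: spoly where "szero = (\<lambda>_ _. 0)"

definition sone :: spoly where
  "sone = (\<lambda>\<alpha> S. if \<alpha> = (\<lambda>_. 0) \<and> S = {} then 1 else 0)"

definition sp_ok :: "nat \<Rightarrow> nat \<Rightarrow> spoly \<Rightarrow> bool" where
  "sp_ok m n F \<longleftrightarrow> finite {(\<alpha>, S). F \<alpha> S \<noteq> 0} \<and>
     (\<forall>\<alpha> S. F \<alpha> S \<noteq> 0 \<longrightarrow> (\<forall>i. i \<notin> {1..m} \<longrightarrow> \<alpha> i = 0) \<and> S \<subseteq> {1..2*n})"

text \<open>Sign of theta_S theta_T = sgn S T * theta_{S union T} for disjoint S, T.\<close>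
definition gsign :: "nat set \<Rightarrow> nat set \<Rightarrow> real" where
  "gsign S T = (-1) ^ card {(s, t). s \<in> S \<and> t \<in> T \<and> t < s}"

definition smul :: "spoly \<Rightarrow> spoly \<Rightarrow> spoly" where
  "smul F G = (\<lambda>\<gamma> U. \<Sum>\<alpha>\<in>{\<alpha>. \<forall>i. \<alpha> i \<le> \<gamma> i}. \<Sum>S\<in>Pow U.
       gsign S (U - S) * F \<alpha> S * G (\<lambda>i. \<gamma> i - \<alpha> i) (U - S))"

fun spow :: "spoly \<Rightarrow> nat \<Rightarrow> spoly" where
  "spow F 0 = sone"
| "spow F (Suc k) = smul F (spow F k)"

definition dx :: "nat \<Rightarrow> spoly \<Rightarrow> spoly" where
  "dx j F = (\<lambda>\<alpha> S. real (\<alpha> j + 1) * F (\<alpha>(j := \<alpha> j + 1)) S)"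

text \<open>(Left) Grassmann derivative in theta_j.\<close>
definition dth :: "nat \<Rightarrow> spoly \<Rightarrow> spoly" where
  "dth j F = (\<lambda>\<alpha> S. if j \<in> S then 0 else (-1) ^ card {s \<in> S. s < j} * F \<alpha> (insert j S))"

definition lap_b :: "nat \<Rightarrow> spoly \<Rightarrow> spoly" where
  "lap_b m F = (\<lambda>\<alpha> S. - (\<Sum>j=1..m. dx j (dx j F) \<alpha> S))"

definition lap_f :: "nat \<Rightarrow> spoly \<Rightarrow> spoly" where
  "lap_f n F = (\<lambda>\<alpha> S. 4 * (\<Sum>j=1..n. dth (2*j - 1) (dth (2*j) F) \<alpha> S))"

definition super_lap :: "nat \<Rightarrow> nat \<Rightarrow> spoly \<Rightarrow> spoly" where
  "super_lap m n F = (\<lambda>\<alpha> S. lap_b m F \<alpha> S + lap_f n F \<alpha> S)"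

definition xsq :: "nat \<Rightarrow> spoly" where
  "xsq m = (\<lambda>\<alpha> S. if S = {} \<and> (\<exists>j\<in>{1..m}. \<alpha> = (\<lambda>i. if i = j then 2 else 0)) then -1 else 0)"

definition thsq :: "nat \<Rightarrow> spoly" where
  "thsq n = (\<lambda>\<alpha> S. if \<alpha> = (\<lambda>_. 0) \<and> (\<exists>j\<in>{1..n}. S = {2*j - 1, 2*j}) then 1 else 0)"

definition fpoly :: "nat \<Rightarrow> nat \<Rightarrow> (nat \<Rightarrow> real) \<Rightarrow> nat \<Rightarrow> spoly" where
  "fpoly m n a k = (\<lambda>\<alpha> S. \<Sum>i\<le>k. a i * smul (spow (xsq m) (k - i)) (spow (thsq n) i) \<alpha> S)"

definition Hb :: "nat \<Rightarrow> nat \<Rightarrow> nat \<Rightarrow> spoly set" where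
  "Hb m n p = {F. sp_ok m n F \<and> (\<forall>\<alpha> S. F \<alpha> S \<noteq> 0 \<longrightarrow> S = {} \<and> (\<Sum>i=1..m. \<alpha> i) = p)
                 \<and> lap_b m F = szero}"

definition Hf :: "nat \<Rightarrow> nat \<Rightarrow> nat \<Rightarrow> spoly set" where
  "Hf m n q = {G. sp_ok m n G \<and> (\<forall>\<alpha> S. G \<alpha> S \<noteq> 0 \<longrightarrow> \<alpha> = (\<lambda>_. 0) \<and> card S = q)
                 \<and> lap_f n G = szero}"

definition fspan :: "nat \<Rightarrow> nat \<Rightarrow> spoly \<Rightarrow> nat \<Rightarrow> nat \<Rightarrow> spoly set" where
  "fspan m n f p q = {F. \<exists>(N::nat) h g. (\<forall>i<N. h i \<in> Hb m n p \<and> g i \<in> Hf m n q) \<and>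
       F = (\<lambda>\<alpha> S. \<Sum>i<N. smul (smul f (h i)) (g i) \<alpha> S)}"

end

theory Submission
  imports Defs
begin


definition Dset :: "(nat \<Rightarrow> nat) \<Rightarrow> (nat \<Rightarrow> nat) set" where
  "Dset \<gamma> = {\<alpha>. \<forall>i. \<alpha> i \<le> \<gamma> i}"

lemma finite_Dset:
  assumes "finite {i. \<gamma> i \<noteq> 0}"
  shows "finite (Dset \<gamma>)"
proof -
  let ?I = "{i. \<gamma> i \<noteq> 0}"
  have sub: "(\<lambda>\<alpha>. restrict \<alpha> ?I) ` Dset \<gamma> \<subseteq> PiE ?I (\<lambda>i. {0..\<gamma> i})"
    by (auto simp: Dset_def PiE_def Pi_def)
  have fin: "finite (PiE ?I (\<lambda>i. {0..\<gamma> i}))"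
    using assms by (intro finite_PiE) auto
  have inj: "inj_on (\<lambda>\<alpha>. restrict \<alpha> ?I) (Dset \<gamma>)"
  proof (rule inj_onI)
    fix a b assume a: "a \<in> Dset \<gamma>" and b: "b \<in> Dset \<gamma>" and e: "restrict a ?I = restrict b ?I"
    show "a = b"
    proof
      fix i show "a i = b i"
      proof (cases "\<gamma> i = 0")
        case True then show ?thesis using a b by (auto simp: Dset_def intro: le_antisym) (metis le_zero_eq)
      next
        case False then show ?thesis using fun_cong[OF e, of i] by auto
      qed
    qed
  qed
  show ?thesis using finite_subset[OF sub fin] inj finite_imageD by blast
qed

lemma infinite_Dset:
  assumes "infinite {i. \<gamma> i \<noteq> 0}"
  shows "infinite (Dset \<gamma>)"
proof
  assume f: "finite (Dset \<gamma>)"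
  have "(\<lambda>i. (\<lambda>l. if l = i then 1 else 0)) ` {i. \<gamma> i \<noteq> 0} \<subseteq> Dset \<gamma>"
    by (auto simp: Dset_def)
  moreover have "inj_on (\<lambda>i. (\<lambda>l. if l = i then (1::nat) else 0)) {i. \<gamma> i \<noteq> 0}"
    by (rule inj_onI) (metis (mono_tags) one_neq_zero)
  ultimately show False using f assms
    by (metis finite_imageD finite_subset)
qed

lemma finite_Dset_iff: "finite (Dset \<gamma>) \<longleftrightarrow> finite {i. \<gamma> i \<noteq> 0}"
  using finite_Dset infinite_Dset by blast

definition bmul :: "((nat \<Rightarrow> nat) \<Rightarrow> real) \<Rightarrow> ((nat \<Rightarrow> nat) \<Rightarrow> real) \<Rightarrow> (nat \<Rightarrow> nat) \<Rightarrow> real" where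
  "bmul A B = (\<lambda>\<gamma>. \<Sum>\<alpha>\<in>Dset \<gamma>. A \<alpha> * B (\<lambda>i. \<gamma> i - \<alpha> i))"

definition binf :: "((nat \<Rightarrow> nat) \<Rightarrow> real) \<Rightarrow> bool" where
  "binf B \<longleftrightarrow> (\<forall>\<gamma>. infinite {i. \<gamma> i \<noteq> 0} \<longrightarrow> B \<gamma> = 0)"

lemma binf_bmul: "binf (bmul A B)"
  unfolding binf_def bmul_def using infinite_Dset by auto

definition delta0 :: "(nat \<Rightarrow> nat) \<Rightarrow> real" where
  "delta0 \<alpha> = (if \<alpha> = (\<lambda>_. 0) then 1 else 0)"

lemma binf_delta0: "binf delta0"
  unfolding binf_def delta0_def by auto

lemma bmul_delta0_right:
  assumes "binf B" shows "bmul B delta0 = B"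
proof
  fix \<gamma>
  show "bmul B delta0 \<gamma> = B \<gamma>"
  proof (cases "finite {i. \<gamma> i \<noteq> 0}")
    case False then show ?thesis using assms infinite_Dset by (auto simp: binf_def bmul_def)
  next
    case True
    have g: "\<gamma> \<in> Dset \<gamma>" by (simp add: Dset_def)
    have "bmul B delta0 \<gamma> = (\<Sum>\<alpha>\<in>{\<gamma>}. B \<alpha> * delta0 (\<lambda>i. \<gamma> i - \<alpha> i))"
      unfolding bmul_def
    proof (rule sum.mono_neutral_right)
      show "finite (Dset \<gamma>)" using True finite_Dset by blast
      show "{\<gamma>} \<subseteq> Dset \<gamma>" using g by simp
      show "\<forall>i\<in>Dset \<gamma> - {\<gamma>}. B i * delta0 (\<lambda>ia. \<gamma> ia - i ia) = 0"
      proof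
        fix a assume a: "a \<in> Dset \<gamma> - {\<gamma>}"
        have "(\<lambda>i. \<gamma> i - a i) \<noteq> (\<lambda>_. 0)"
        proof
          assume "(\<lambda>i. \<gamma> i - a i) = (\<lambda>_. 0)"
          then have "\<forall>i. \<gamma> i \<le> a i" by (metis diff_is_0_eq)
          then have "a = \<gamma>" using a by (auto simp: Dset_def intro!: ext le_antisym)
          then show False using a by simp
        qed
        then show "B a * delta0 (\<lambda>i. \<gamma> i - a i) = 0" by (simp add: delta0_def)
      qed
    qed
    also have "\<dots> = B \<gamma>" by (simp add: delta0_def)
    finally show ?thesis .
  qed
qed

lemma bmul_delta0_left:
  assumes "binf B" shows "bmul delta0 B = B"
proof
  fix \<gamma>
  show "bmul delta0 B \<gamma> = B \<gamma>"
  proof (cases "finite {i. \<gamma> i \<noteq> 0}")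
    case False then show ?thesis using assms infinite_Dset by (auto simp: binf_def bmul_def)
  next
    case True
    have g: "(\<lambda>_. 0) \<in> Dset \<gamma>" by (simp add: Dset_def)
    have "bmul delta0 B \<gamma> = (\<Sum>\<alpha>\<in>{(\<lambda>_. 0)}. delta0 \<alpha> * B (\<lambda>i. \<gamma> i - \<alpha> i))"
      unfolding bmul_def
      by (rule sum.mono_neutral_right) (use True finite_Dset g in \<open>auto simp: delta0_def\<close>)
    also have "\<dots> = B \<gamma>" by (simp add: delta0_def)
    finally show ?thesis .
  qed
qed

lemma bmul_assoc: "bmul (bmul A B) C = bmul A (bmul B C)"
proof
  fix \<gamma>
  show "bmul (bmul A B) C \<gamma> = bmul A (bmul B C) \<gamma>"
  proof (cases "finite (Dset \<gamma>)")
    case False then show ?thesis by (simp add: bmul_def)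
  next
    case True
    have finD: "\<beta> \<in> Dset \<gamma> \<Longrightarrow> finite (Dset \<beta>)" for \<beta>
      by (rule finite_subset[OF _ True]) (auto simp: Dset_def intro: le_trans)
    have finD2: "\<alpha> \<in> Dset \<gamma> \<Longrightarrow> finite (Dset (\<lambda>i. \<gamma> i - \<alpha> i))" for \<alpha>
      by (rule finite_subset[OF _ True]) (auto simp: Dset_def intro: le_trans)
    have "bmul (bmul A B) C \<gamma> = (\<Sum>\<beta>\<in>Dset \<gamma>. \<Sum>\<alpha>\<in>Dset \<beta>. A \<alpha> * B (\<lambda>i. \<beta> i - \<alpha> i) * C (\<lambda>i. \<gamma> i - \<beta> i))"
      by (simp add: bmul_def sum_distrib_right)
    also have "\<dots> = (\<Sum>(\<beta>,\<alpha>)\<in>Sigma (Dset \<gamma>) Dset. A \<alpha> * B (\<lambda>i. \<beta> i - \<alpha> i) * C (\<lambda>i. \<gamma> i - \<beta> i))"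
      by (rule sum.Sigma) (use True finD in auto)
    also have "\<dots> = (\<Sum>(\<alpha>,\<delta>)\<in>Sigma (Dset \<gamma>) (\<lambda>\<alpha>. Dset (\<lambda>i. \<gamma> i - \<alpha> i)). A \<alpha> * B \<delta> * C (\<lambda>i. (\<gamma> i - \<alpha> i) - \<delta> i))"
    proof (rule sum.reindex_bij_witness[where i="\<lambda>(\<alpha>,\<delta>). (\<lambda>i. \<alpha> i + \<delta> i, \<alpha>)" and j="\<lambda>(\<beta>,\<alpha>). (\<alpha>, \<lambda>i. \<beta> i - \<alpha> i)"])
      fix a assume "a \<in> Sigma (Dset \<gamma>) Dset"
      then obtain b c where a: "a = (b,c)" "\<forall>i. b i \<le> \<gamma> i" "\<forall>i. c i \<le> b i" by (auto simp: Dset_def)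
      show "(case (case a of (\<beta>, \<alpha>) \<Rightarrow> (\<alpha>, \<lambda>i. \<beta> i - \<alpha> i)) of (\<alpha>, \<delta>) \<Rightarrow> (\<lambda>i. \<alpha> i + \<delta> i, \<alpha>)) = a"
        using a by (auto intro!: ext)
      show "(case a of (\<beta>, \<alpha>) \<Rightarrow> (\<alpha>, \<lambda>i. \<beta> i - \<alpha> i)) \<in> Sigma (Dset \<gamma>) (\<lambda>\<alpha>. Dset (\<lambda>i. \<gamma> i - \<alpha> i))"
        using a by (auto simp: Dset_def intro: le_trans diff_le_mono)
      have "(\<lambda>i. \<gamma> i - c i - (b i - c i)) = (\<lambda>i. \<gamma> i - b i)" using a by (auto intro!: ext)
      then show "(case (case a of (\<beta>, \<alpha>) \<Rightarrow> (\<alpha>, \<lambda>i. \<beta> i - \<alpha> i)) of (\<alpha>, \<delta>) \<Rightarrow> A \<alpha> * B \<delta> * C (\<lambda>i. \<gamma> i - \<alpha> i - \<delta> i)) =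
         (case a of (\<beta>, \<alpha>) \<Rightarrow> A \<alpha> * B (\<lambda>i. \<beta> i - \<alpha> i) * C (\<lambda>i. \<gamma> i - \<beta> i))"
        using a by simp
    next
      fix a assume "a \<in> Sigma (Dset \<gamma>) (\<lambda>\<alpha>. Dset (\<lambda>i. \<gamma> i - \<alpha> i))"
      then obtain b c where a: "a = (b,c)" "\<forall>i. b i \<le> \<gamma> i" "\<forall>i. c i \<le> \<gamma> i - b i" by (auto simp: Dset_def)
      show "(case (case a of (\<alpha>, \<delta>) \<Rightarrow> (\<lambda>i. \<alpha> i + \<delta> i, \<alpha>)) of (\<beta>, \<alpha>) \<Rightarrow> (\<alpha>, \<lambda>i. \<beta> i - \<alpha> i)) = a"
        using a by (auto intro!: ext)
      show "(case a of (\<alpha>, \<delta>) \<Rightarrow> (\<lambda>i. \<alpha> i + \<delta> i, \<alpha>)) \<in> Sigma (Dset \<gamma>) Dset"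
        using a by (auto simp: Dset_def) (metis le_add_diff_inverse add_le_cancel_left)
    qed
    also have "\<dots> = (\<Sum>\<alpha>\<in>Dset \<gamma>. \<Sum>\<delta>\<in>Dset (\<lambda>i. \<gamma> i - \<alpha> i). A \<alpha> * B \<delta> * C (\<lambda>i. (\<gamma> i - \<alpha> i) - \<delta> i))"
      by (rule sum.Sigma[symmetric]) (use True finD2 in auto)
    also have "\<dots> = bmul A (bmul B C) \<gamma>"
      by (simp add: bmul_def sum_distrib_left mult.assoc)
    finally show ?thesis .
  qed
qed


definition e2 :: "nat \<Rightarrow> nat \<Rightarrow> nat" where "e2 j = (\<lambda>i. if i = j then 2 else 0)"

definition Xb :: "nat \<Rightarrow> (nat \<Rightarrow> nat) \<Rightarrow> real" where
  "Xb m \<alpha> = (if \<exists>j\<in>{1..m}. \<alpha> = (\<lambda>i. if i = j then 2 else 0) then -1 else 0)"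

lemma inj_e2: "inj e2"
proof (rule injI)
  fix a b assume "e2 a = e2 b"
  then have "e2 a a = e2 b a" by simp
  then show "a = b" by (simp add: e2_def split: if_splits)
qed

lemma bmul_Xb:
  assumes "binf Y"
  shows "bmul (Xb m) Y \<gamma> = - (\<Sum>i=1..m. if 2 \<le> \<gamma> i then Y (\<gamma>(i := \<gamma> i - 2)) else 0)"
proof (cases "finite {i. \<gamma> i \<noteq> 0}")
  case False
  have "Y (\<gamma>(i := \<gamma> i - 2)) = 0" for i
  proof -
    have "{l. (\<gamma>(i := \<gamma> i - 2)) l \<noteq> 0} \<supseteq> {l. \<gamma> l \<noteq> 0} - {i}" by auto
    then have "infinite {l. (\<gamma>(i := \<gamma> i - 2)) l \<noteq> 0}"
    proof (intro notI)
      assume "finite {l. (\<gamma>(i := \<gamma> i - 2)) l \<noteq> 0}" "{l. \<gamma> l \<noteq> 0} - {i} \<subseteq> {l. (\<gamma>(i := \<gamma> i - 2)) l \<noteq> 0}"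
      then have "finite ({l. \<gamma> l \<noteq> 0} - {i})" using finite_subset by blast
      then show False using False by simp
    qed
    then show ?thesis using assms by (simp add: binf_def)
  qed
  then have "(\<Sum>i=1..m. if 2 \<le> \<gamma> i then Y (\<gamma>(i := \<gamma> i - 2)) else 0) = 0"
    by (intro sum.neutral) simp
  then show ?thesis using False infinite_Dset by (simp add: bmul_def)
next
  case True
  let ?I = "{i\<in>{1..m}. 2 \<le> \<gamma> i}"
  have "bmul (Xb m) Y \<gamma> = (\<Sum>\<alpha>\<in>e2 ` ?I. Xb m \<alpha> * Y (\<lambda>i. \<gamma> i - \<alpha> i))"
    unfolding bmul_def
  proof (rule sum.mono_neutral_right)
    show "finite (Dset \<gamma>)" using True finite_Dset by blast
    show "e2 ` ?I \<subseteq> Dset \<gamma>" by (auto simp: e2_def Dset_def)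
    show "\<forall>i\<in>Dset \<gamma> - e2 ` ?I. Xb m i * Y (\<lambda>ia. \<gamma> ia - i ia) = 0"
    proof
      fix a assume a: "a \<in> Dset \<gamma> - e2 ` ?I"
      have "Xb m a = 0"
      proof (rule ccontr)
        assume "Xb m a \<noteq> 0"
        then obtain j where j: "j \<in> {1..m}" "a = e2 j" by (auto simp: Xb_def e2_def split: if_splits)
        then have "2 \<le> \<gamma> j" using a by (auto simp: Dset_def e2_def elim!: allE[of _ j])
        then show False using a j by auto
      qed
      then show "Xb m a * Y (\<lambda>ia. \<gamma> ia - a ia) = 0" by simp
    qed
  qed
  also have "\<dots> = (\<Sum>i\<in>?I. Xb m (e2 i) * Y (\<lambda>l. \<gamma> l - e2 i l))"
    using inj_on_subset[OF inj_e2 subset_UNIV] by (simp add: sum.reindex o_def)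
  also have "\<dots> = (\<Sum>i\<in>?I. - Y (\<gamma>(i := \<gamma> i - 2)))"
  proof (rule sum.cong)
    fix i assume i: "i \<in> ?I"
    have "(\<lambda>l. \<gamma> l - e2 i l) = \<gamma>(i := \<gamma> i - 2)" by (auto simp: e2_def)
    moreover have "Xb m (e2 i) = -1" using i by (auto simp: Xb_def e2_def)
    ultimately show "Xb m (e2 i) * Y (\<lambda>l. \<gamma> l - e2 i l) = - Y (\<gamma>(i := \<gamma> i - 2))" by simp
  qed simp
  also have "\<dots> = - (\<Sum>i\<in>?I. Y (\<gamma>(i := \<gamma> i - 2)))" by (simp add: sum_negf)
  also have "\<dots> = - (\<Sum>i=1..m. if 2 \<le> \<gamma> i then Y (\<gamma>(i := \<gamma> i - 2)) else 0)"
    by (simp only: sum.inter_filter[OF finite_atLeastAtMost])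
  finally show ?thesis .
qed

definition lapB :: "nat \<Rightarrow> ((nat \<Rightarrow> nat) \<Rightarrow> real) \<Rightarrow> (nat \<Rightarrow> nat) \<Rightarrow> real" where
  "lapB m B = (\<lambda>\<alpha>. - (\<Sum>j=1..m. (real (\<alpha> j) + 1) * (real (\<alpha> j) + 2) * B (\<alpha>(j := \<alpha> j + 2))))"

lemma binf_lapB: assumes "binf B" shows "binf (lapB m B)"
  unfolding binf_def
proof (intro allI impI)
  fix \<gamma> :: "nat \<Rightarrow> nat" assume inf: "infinite {i. \<gamma> i \<noteq> 0}"
  have "B (\<gamma>(j := \<gamma> j + 2)) = 0" for j
  proof -
    have "{l. (\<gamma>(j := \<gamma> j + 2)) l \<noteq> 0} \<supseteq> {l. \<gamma> l \<noteq> 0}" by auto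
    then have "infinite {l. (\<gamma>(j := \<gamma> j + 2)) l \<noteq> 0}" using inf finite_subset by blast
    then show ?thesis using assms by (simp add: binf_def)
  qed
  then show "lapB m B \<gamma> = 0" by (simp add: lapB_def)
qed

lemma lapB_bmul_Xb:
  assumes "binf Y"
  shows "lapB m (bmul (Xb m) Y) \<gamma> = (4 * (\<Sum>j=1..m. real (\<gamma> j)) + 2 * real m) * Y \<gamma> + bmul (Xb m) (lapB m Y) \<gamma>"
proof -
  define c where "c j = (real (\<gamma> j) + 1) * (real (\<gamma> j) + 2)" for j
  define H where "H i j = (if 2 \<le> \<gamma> i then Y (\<gamma>(i := \<gamma> i - 2, j := \<gamma> j + 2)) else 0)" for i j
  define A where "A i j = c j * (if i = j then Y \<gamma> else H i j)" for i j
  define B where "B i j = (if 2 \<le> \<gamma> i then (if i = j then (real (\<gamma> i) - 1) * real (\<gamma> i) * Y \<gamma> else c j * Y (\<gamma>(i := \<gamma> i - 2, j := \<gamma> j + 2))) else 0)" for i j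
  have L: "lapB m (bmul (Xb m) Y) \<gamma> = (\<Sum>j=1..m. \<Sum>i=1..m. A i j)"
  proof -
    have "lapB m (bmul (Xb m) Y) \<gamma> = (\<Sum>j=1..m. c j * (\<Sum>i=1..m. if 2 \<le> (\<gamma>(j := \<gamma> j + 2)) i then Y ((\<gamma>(j := \<gamma> j + 2))(i := (\<gamma>(j := \<gamma> j + 2)) i - 2)) else 0))"
      unfolding lapB_def bmul_Xb[OF assms] c_def by (simp add: sum_negf)
    also have "\<dots> = (\<Sum>j=1..m. \<Sum>i=1..m. A i j)"
    proof (rule sum.cong[OF refl])
      fix j
      show "c j * (\<Sum>i=1..m. if 2 \<le> (\<gamma>(j := \<gamma> j + 2)) i then Y ((\<gamma>(j := \<gamma> j + 2))(i := (\<gamma>(j := \<gamma> j + 2)) i - 2)) else 0) = (\<Sum>i=1..m. A i j)"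
        unfolding sum_distrib_left A_def
      proof (rule sum.cong[OF refl])
        fix i
        show "c j * (if 2 \<le> (\<gamma>(j := \<gamma> j + 2)) i then Y ((\<gamma>(j := \<gamma> j + 2))(i := (\<gamma>(j := \<gamma> j + 2)) i - 2)) else 0) =
              c j * (if i = j then Y \<gamma> else H i j)"
        proof (cases "i = j")
          case True then show ?thesis by simp
        next
          case False then show ?thesis by (simp add: H_def fun_upd_twist)
        qed
      qed
    qed
    finally show ?thesis .
  qed
  have R: "bmul (Xb m) (lapB m Y) \<gamma> = (\<Sum>j=1..m. \<Sum>i=1..m. B i j)"
  proof -
    have "bmul (Xb m) (lapB m Y) \<gamma> = (\<Sum>i=1..m. - (if 2 \<le> \<gamma> i then lapB m Y (\<gamma>(i := \<gamma> i - 2)) else 0))"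
      unfolding bmul_Xb[OF binf_lapB[OF assms]] by (simp add: sum_negf)
    also have "\<dots> = (\<Sum>i=1..m. \<Sum>j=1..m. B i j)"
    proof (rule sum.cong[OF refl])
      fix i
      show "- (if 2 \<le> \<gamma> i then lapB m Y (\<gamma>(i := \<gamma> i - 2)) else 0) = (\<Sum>j=1..m. B i j)"
      proof (cases "2 \<le> \<gamma> i")
        case False then show ?thesis by (simp add: B_def)
      next
        case True
        have "lapB m Y (\<gamma>(i := \<gamma> i - 2)) = - (\<Sum>j=1..m. B i j)"
        proof -
        have "(\<Sum>j=1..m. (real ((\<gamma>(i := \<gamma> i - 2)) j) + 1) * (real ((\<gamma>(i := \<gamma> i - 2)) j) + 2) * Y ((\<gamma>(i := \<gamma> i - 2))(j := (\<gamma>(i := \<gamma> i - 2)) j + 2))) = (\<Sum>j=1..m. B i j)"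
        proof (intro sum.cong[OF refl])
          fix j
          show "(real ((\<gamma>(i := \<gamma> i - 2)) j) + 1) * (real ((\<gamma>(i := \<gamma> i - 2)) j) + 2) * Y ((\<gamma>(i := \<gamma> i - 2))(j := (\<gamma>(i := \<gamma> i - 2)) j + 2)) = B i j"
          proof (cases "i = j")
            case True
            then have "(\<gamma>(i := \<gamma> i - 2))(j := (\<gamma>(i := \<gamma> i - 2)) j + 2) = \<gamma>" using \<open>2 \<le> \<gamma> i\<close> by (auto intro!: ext)
            moreover have "real (\<gamma> i - 2) + 1 = real (\<gamma> i) - 1" "real (\<gamma> i - 2) + 2 = real (\<gamma> i)" using \<open>2 \<le> \<gamma> i\<close> by auto
            ultimately show ?thesis using True \<open>2 \<le> \<gamma> i\<close> by (simp add: B_def)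
          next
            case False then show ?thesis using \<open>2 \<le> \<gamma> i\<close> by (simp add: B_def c_def)
          qed
        qed
        then show ?thesis unfolding lapB_def by simp
        qed
        then show ?thesis using True by simp
      qed
    qed
    also have "\<dots> = (\<Sum>j=1..m. \<Sum>i=1..m. B i j)" by (rule sum.swap)
    finally show ?thesis .
  qed
  have AB: "A i j = B i j + (if i = j then (4 * real (\<gamma> j) + 2) * Y \<gamma> else 0)" for i j
  proof (cases "i = j")
    case True
    show ?thesis
    proof (cases "2 \<le> \<gamma> j")
      case True
      have "(real (\<gamma> j) + 1) * (real (\<gamma> j) + 2) = (real (\<gamma> j) - 1) * real (\<gamma> j) + (4 * real (\<gamma> j) + 2)"
        by (simp add: algebra_simps)
      then show ?thesis using \<open>i = j\<close> True by (simp add: A_def B_def c_def distrib_right)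
    next
      case False
      then have "\<gamma> j = 0 \<or> \<gamma> j = 1" by auto
      then show ?thesis using \<open>i = j\<close> False by (auto simp: A_def B_def c_def)
    qed
  next
    case False then show ?thesis by (simp add: A_def B_def H_def c_def)
  qed
  have "lapB m (bmul (Xb m) Y) \<gamma> = (\<Sum>j=1..m. \<Sum>i=1..m. B i j) + (\<Sum>j=1..m. \<Sum>i=1..m. if i = j then (4 * real (\<gamma> j) + 2) * Y \<gamma> else 0)"
    unfolding L AB by (simp only: sum.distrib)
  also have "(\<Sum>j=1..m. \<Sum>i=1..m. if i = j then (4 * real (\<gamma> j) + 2) * Y \<gamma> else (0::real)) = (\<Sum>j=1..m. (4 * real (\<gamma> j) + 2) * Y \<gamma>)"
    by (rule sum.cong[OF refl]) (simp add: sum.delta)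
  also have "\<dots> = (4 * (\<Sum>j=1..m. real (\<gamma> j)) + 2 * real m) * Y \<gamma>"
    by (simp add: sum_distrib_right sum.distrib sum_distrib_left algebra_simps)
  finally show ?thesis using R by simp
qed


definition fmul :: "(nat set \<Rightarrow> real) \<Rightarrow> (nat set \<Rightarrow> real) \<Rightarrow> nat set \<Rightarrow> real" where
  "fmul W Z = (\<lambda>U. \<Sum>S\<in>Pow U. gsign S (U - S) * W S * Z (U - S))"

definition ffin :: "(nat set \<Rightarrow> real) \<Rightarrow> bool" where
  "ffin W \<longleftrightarrow> (\<forall>U. infinite U \<longrightarrow> W U = 0)"

definition one_f :: "nat set \<Rightarrow> real" where "one_f S = (if S = {} then 1 else 0)"

lemma ffin_fmul: "ffin (fmul W Z)"
  unfolding ffin_def fmul_def by simp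

lemma ffin_one_f: "ffin one_f"
  unfolding ffin_def one_f_def by auto

lemma gsign_empty1[simp]: "gsign {} T = 1" by (simp add: gsign_def)
lemma gsign_empty2[simp]: "gsign S {} = 1" by (simp add: gsign_def)

lemma fmul_one_left: assumes "ffin W" shows "fmul one_f W = W"
proof
  fix U show "fmul one_f W U = W U"
  proof (cases "finite U")
    case False then show ?thesis using assms by (simp add: fmul_def ffin_def)
  next
    case True
    have "fmul one_f W U = (\<Sum>S\<in>{{}}. gsign S (U - S) * one_f S * W (U - S))"
      unfolding fmul_def by (rule sum.mono_neutral_right) (use True in \<open>auto simp: one_f_def\<close>)
    then show ?thesis by (simp add: one_f_def)
  qed
qed

lemma fmul_one_right: assumes "ffin W" shows "fmul W one_f = W"
proof
  fix U show "fmul W one_f U = W U"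
  proof (cases "finite U")
    case False then show ?thesis using assms by (simp add: fmul_def ffin_def)
  next
    case True
    have "fmul W one_f U = (\<Sum>S\<in>{U}. gsign S (U - S) * W S * one_f (U - S))"
      unfolding fmul_def by (rule sum.mono_neutral_right) (use True in \<open>auto simp: one_f_def\<close>)
    then show ?thesis by (simp add: one_f_def)
  qed
qed

lemma gsign_Un_left:
  assumes "A \<inter> B = {}" "finite A" "finite B" "finite C"
  shows "gsign (A \<union> B) C = gsign A C * gsign B C"
proof -
  let ?P = "\<lambda>X. {(s, t). s \<in> X \<and> t \<in> C \<and> t < s}"
  have e: "?P (A \<union> B) = ?P A \<union> ?P B" by auto
  have f: "finite (?P X)" if "finite X" for X
    by (rule finite_subset[of _ "X \<times> C"]) (use that assms in auto)
  have d: "?P A \<inter> ?P B = {}" using assms by auto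
  have "card (?P (A \<union> B)) = card (?P A) + card (?P B)"
    unfolding e by (rule card_Un_disjoint) (use f assms d in auto)
  then show ?thesis by (simp add: gsign_def power_add)
qed

lemma gsign_Un_right:
  assumes "B \<inter> C = {}" "finite A" "finite B" "finite C"
  shows "gsign A (B \<union> C) = gsign A B * gsign A C"
proof -
  let ?P = "\<lambda>X. {(s, t). s \<in> A \<and> t \<in> X \<and> t < s}"
  have e: "?P (B \<union> C) = ?P B \<union> ?P C" by auto
  have f: "finite (?P X)" if "finite X" for X
    by (rule finite_subset[of _ "A \<times> X"]) (use that assms in auto)
  have d: "?P B \<inter> ?P C = {}" using assms by auto
  have "card (?P (B \<union> C)) = card (?P B) + card (?P C)"
    unfolding e by (rule card_Un_disjoint) (use f assms d in auto)
  then show ?thesis by (simp add: gsign_def power_add)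
qed

lemma fmul_assoc: "fmul (fmul W Z) R = fmul W (fmul Z R)"
proof
  fix U
  show "fmul (fmul W Z) R U = fmul W (fmul Z R) U"
  proof (cases "finite U")
    case False then show ?thesis by (simp add: fmul_def)
  next
    case True
    have "fmul (fmul W Z) R U = (\<Sum>S\<in>Pow U. \<Sum>A\<in>Pow S. gsign S (U - S) * gsign A (S - A) * W A * Z (S - A) * R (U - S))"
      by (simp add: fmul_def sum_distrib_left sum_distrib_right mult.assoc)
    also have "\<dots> = (\<Sum>(S,A)\<in>Sigma (Pow U) Pow. gsign S (U - S) * gsign A (S - A) * W A * Z (S - A) * R (U - S))"
      by (rule sum.Sigma) (use True finite_subset in auto)
    also have "\<dots> = (\<Sum>(A,B)\<in>Sigma (Pow U) (\<lambda>A. Pow (U - A)). gsign A (U - A) * gsign B (U - A - B) * W A * Z B * R (U - A - B))"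
    proof (rule sum.reindex_bij_witness[where i="\<lambda>(A,B). (A \<union> B, A)" and j="\<lambda>(S,A). (A, S - A)"])
      fix a assume "a \<in> Sigma (Pow U) Pow"
      then obtain S A where a: "a = (S, A)" "S \<subseteq> U" "A \<subseteq> S" by auto
      show "(case (case a of (S, A) \<Rightarrow> (A, S - A)) of (A, B) \<Rightarrow> (A \<union> B, A)) = a" using a by auto
      show "(case a of (S, A) \<Rightarrow> (A, S - A)) \<in> Sigma (Pow U) (\<lambda>A. Pow (U - A))" using a by auto
      have fin: "finite A" "finite (S - A)" "finite (U - S)" using a True by (auto intro: finite_subset[OF _ True])
      have S: "S = A \<union> (S - A)" and UA: "U - A = (S - A) \<union> (U - S)" and UAB: "U - A - (S - A) = U - S" using a by auto
      have "gsign S (U - S) = gsign A (U - S) * gsign (S - A) (U - S)"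
        by (subst S, rule gsign_Un_left) (use fin in auto)
      moreover have "gsign A (U - A) = gsign A (S - A) * gsign A (U - S)"
        by (subst UA, rule gsign_Un_right) (use fin in auto)
      ultimately show "(case (case a of (S, A) \<Rightarrow> (A, S - A)) of (A, B) \<Rightarrow> gsign A (U - A) * gsign B (U - A - B) * W A * Z B * R (U - A - B)) =
         (case a of (S, A) \<Rightarrow> gsign S (U - S) * gsign A (S - A) * W A * Z (S - A) * R (U - S))"
        using a UAB by (simp add: algebra_simps)
    next
      fix b assume "b \<in> Sigma (Pow U) (\<lambda>A. Pow (U - A))"
      then obtain A B where b: "b = (A, B)" "A \<subseteq> U" "B \<subseteq> U - A" by auto
      show "(case (case b of (A, B) \<Rightarrow> (A \<union> B, A)) of (S, A) \<Rightarrow> (A, S - A)) = b" using b by auto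
      show "(case b of (A, B) \<Rightarrow> (A \<union> B, A)) \<in> Sigma (Pow U) Pow" using b by auto
    qed
    also have "\<dots> = (\<Sum>A\<in>Pow U. \<Sum>B\<in>Pow (U - A). gsign A (U - A) * gsign B (U - A - B) * W A * Z B * R (U - A - B))"
      by (rule sum.Sigma[symmetric]) (use True in auto)
    also have "\<dots> = fmul W (fmul Z R) U"
      by (simp add: fmul_def sum_distrib_left mult.assoc mult.left_commute)
    finally show ?thesis .
  qed
qed


definition pr :: "nat \<Rightarrow> nat set" where "pr j = {2*j - 1, 2*j}"

definition Tf :: "nat \<Rightarrow> nat set \<Rightarrow> real" where
  "Tf n S = (if \<exists>j\<in>{1..n}. S = {2*j - 1, 2*j} then 1 else 0)"

definition lapF :: "nat \<Rightarrow> (nat set \<Rightarrow> real) \<Rightarrow> nat set \<Rightarrow> real" where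
  "lapF n W = (\<lambda>S. -4 * (\<Sum>j\<in>{j\<in>{1..n}. pr j \<inter> S = {}}. W (S \<union> pr j)))"

lemma pr_disj: "1 \<le> j \<Longrightarrow> 1 \<le> l \<Longrightarrow> j \<noteq> l \<Longrightarrow> pr j \<inter> pr l = {}"
  unfolding pr_def by auto

lemma pr_disj': "1 \<le> j \<Longrightarrow> 1 \<le> l \<Longrightarrow> x \<in> pr j \<Longrightarrow> x \<in> pr l \<Longrightarrow> j = l"
  using pr_disj by blast

lemma pr_ne: "pr j \<noteq> {}" by (simp add: pr_def)

lemma inj_pr: "inj_on pr {1..n}"
proof (rule inj_onI)
  fix a b assume "a \<in> {1..n}" "b \<in> {1..n}" "pr a = pr b"
  then show "a = b" using pr_disj[of a b] pr_ne[of a] by auto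
qed

lemma finite_pr[simp]: "finite (pr j)" by (simp add: pr_def)

lemma gsign_pr:
  assumes "1 \<le> j" "pr j \<inter> V = {}"
  shows "gsign (pr j) V = 1"
proof -
  let ?L = "{t\<in>V. t < 2*j - 1}"
  have "{(s, t). s \<in> pr j \<and> t \<in> V \<and> t < s} = {2*j - 1, 2*j} \<times> ?L"
  proof -
    have "2*j - 1 \<notin> V" using assms by (auto simp: pr_def)
    then have h: "t \<in> V \<Longrightarrow> t < 2*j \<Longrightarrow> t < 2*j - 1" for t
      by (cases "t = 2*j - 1") auto
    show ?thesis using assms h by (auto simp: pr_def)
  qed
  moreover have "card {2*j - 1, 2*j} = 2" using assms by auto
  ultimately show ?thesis by (simp add: gsign_def card_cartesian_product power_mult)
qed

lemma ffin_lapF: "ffin W \<Longrightarrow> ffin (lapF n W)"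
  unfolding ffin_def lapF_def by simp

lemma fmul_Tf:
  assumes "ffin W"
  shows "fmul (Tf n) W U = (\<Sum>j\<in>{j\<in>{1..n}. pr j \<subseteq> U}. W (U - pr j))"
proof (cases "finite U")
  case False
  then have "W (U - pr j) = 0" for j using assms by (simp add: ffin_def)
  then show ?thesis using False by (simp add: fmul_def)
next
  case True
  let ?J = "{j\<in>{1..n}. pr j \<subseteq> U}"
  have "fmul (Tf n) W U = (\<Sum>S\<in>pr ` ?J. gsign S (U - S) * Tf n S * W (U - S))"
    unfolding fmul_def
  proof (rule sum.mono_neutral_right)
    show "finite (Pow U)" using True by simp
    show "pr ` ?J \<subseteq> Pow U" by auto
    show "\<forall>i\<in>Pow U - pr ` ?J. gsign i (U - i) * Tf n i * W (U - i) = 0"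
      by (auto simp: Tf_def pr_def)
  qed
  also have "\<dots> = (\<Sum>j\<in>?J. gsign (pr j) (U - pr j) * Tf n (pr j) * W (U - pr j))"
  proof -
    have "inj_on pr ?J" by (rule inj_on_subset[OF inj_pr]) auto
    from sum.reindex[OF this, of "\<lambda>S. gsign S (U - S) * Tf n S * W (U - S)"] show ?thesis by (simp only: o_def)
  qed
  also have "\<dots> = (\<Sum>j\<in>?J. W (U - pr j))"
  proof (rule sum.cong[OF refl])
    fix j assume j: "j \<in> ?J"
    have "gsign (pr j) (U - pr j) = 1" by (rule gsign_pr) (use j in auto)
    moreover have "Tf n (pr j) = 1" using j by (auto simp: Tf_def pr_def)
    ultimately show "gsign (pr j) (U - pr j) * Tf n (pr j) * W (U - pr j) = W (U - pr j)" by simp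
  qed
  finally show ?thesis .
qed

lemma card_FR_FU:
  assumes "S \<subseteq> {1..2*n}"
  shows "real (card {j\<in>{1..n}. pr j \<inter> S = {}}) - real (card {j\<in>{1..n}. pr j \<subseteq> S}) = real n - real (card S)"
proof -
  have U: "S = (\<Union>j\<in>{1..n}. S \<inter> pr j)"
  proof
    show "S \<subseteq> (\<Union>j\<in>{1..n}. S \<inter> pr j)"
    proof
      fix x assume x: "x \<in> S"
      then have "1 \<le> x" "x \<le> 2*n" using assms by auto
      have "\<exists>j\<in>{1..n}. x \<in> pr j"
      proof (cases "even x")
        case True
        then obtain k where k: "x = 2*k" by blast
        then show ?thesis using \<open>1 \<le> x\<close> \<open>x \<le> 2*n\<close> by (intro bexI[of _ k]) (auto simp: pr_def)
      next
        case False
        then obtain k where k: "x = 2*k + 1" using oddE by blast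
        then show ?thesis using \<open>1 \<le> x\<close> \<open>x \<le> 2*n\<close> by (intro bexI[of _ "k+1"]) (auto simp: pr_def)
      qed
      then obtain j where "j \<in> {1..n}" "x \<in> pr j" by blast
      then show "x \<in> (\<Union>j\<in>{1..n}. S \<inter> pr j)" using x \<open>j \<in> {1..n}\<close> \<open>x \<in> pr j\<close> by blast
    qed
  qed auto
  have cS: "card S = (\<Sum>j\<in>{1..n}. card (S \<inter> pr j))"
  proof (subst U, rule card_UN_disjoint)
    show "\<forall>i\<in>{1..n}. \<forall>j\<in>{1..n}. i \<noteq> j \<longrightarrow> (S \<inter> pr i) \<inter> (S \<inter> pr j) = {}"
    proof (intro ballI impI)
      fix i j assume "i \<in> {1..n}" "j \<in> {1..n}" "i \<noteq> j"
      then have "1 \<le> i" "1 \<le> j" "i \<noteq> j" by auto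
      then show "(S \<inter> pr i) \<inter> (S \<inter> pr j) = {}" using pr_disj[of i j] by blast
    qed
  qed auto
  have each: "1 - real (card (S \<inter> pr j)) = (if pr j \<inter> S = {} then 1 else 0) - (if pr j \<subseteq> S then 1 else 0)"
    if "j \<in> {1..n}" for j
  proof -
    have ne: "2*j - 1 \<noteq> 2*j" using that by auto
    show ?thesis
      by (cases "2*j - 1 \<in> S"; cases "2*j \<in> S") (use ne in \<open>auto simp: pr_def Int_insert_right\<close>)
  qed
  have "real n - real (card S) = (\<Sum>j\<in>{1..n}. 1 - real (card (S \<inter> pr j)))"
    by (simp add: cS sum_subtractf)
  also have "\<dots> = (\<Sum>j\<in>{1..n}. (if pr j \<inter> S = {} then 1 else 0) - (if pr j \<subseteq> S then 1 else (0::real)))"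
    by (rule sum.cong[OF refl]) (rule each)
  also have "\<dots> = real (card {j\<in>{1..n}. pr j \<inter> S = {}}) - real (card {j\<in>{1..n}. pr j \<subseteq> S})"
    by (simp add: sum_subtractf sum.If_cases Int_def)
  finally show ?thesis by simp
qed

lemma lapF_fmul_Tf:
  assumes "ffin W"
  shows "lapF n (fmul (Tf n) W) S = fmul (Tf n) (lapF n W) S
     - 4 * (real (card {j\<in>{1..n}. pr j \<inter> S = {}}) - real (card {j\<in>{1..n}. pr j \<subseteq> S})) * W S"
proof -
  let ?FR = "{j\<in>{1..n}. pr j \<inter> S = {}}" and ?FU = "{j\<in>{1..n}. pr j \<subseteq> S}"
  define G where "G j l = W ((S - pr l) \<union> pr j)" for j l
  have a: "(\<Sum>l\<in>{l\<in>{1..n}. pr l \<subseteq> S \<union> pr j}. W (S \<union> pr j - pr l)) = W S + (\<Sum>l\<in>?FU. G j l)"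
    if j: "j \<in> ?FR" for j
  proof -
    have e: "{l\<in>{1..n}. pr l \<subseteq> S \<union> pr j} = insert j ?FU"
      using j pr_disj[of j] by auto
    have nj: "j \<notin> ?FU" using j pr_ne[of j] by auto
    have "(\<Sum>l\<in>{l\<in>{1..n}. pr l \<subseteq> S \<union> pr j}. W (S \<union> pr j - pr l)) = W (S \<union> pr j - pr j) + (\<Sum>l\<in>?FU. W (S \<union> pr j - pr l))"
      unfolding e using nj by (simp add: sum.insert)
    moreover have "S \<union> pr j - pr j = S" using j by auto
    moreover have "W (S \<union> pr j - pr l) = G j l" if "l \<in> ?FU" for l
    proof -
      have "l \<noteq> j" using that nj by auto
      then have "S \<union> pr j - pr l = (S - pr l) \<union> pr j" using pr_disj[of j l] j that by auto
      then show ?thesis by (simp add: G_def)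
    qed
    ultimately show ?thesis by simp
  qed
  have b: "(\<Sum>j\<in>{j\<in>{1..n}. pr j \<inter> (S - pr l) = {}}. W ((S - pr l) \<union> pr j)) = W S + (\<Sum>j\<in>?FR. G j l)"
    if l: "l \<in> ?FU" for l
  proof -
    have e: "{j\<in>{1..n}. pr j \<inter> (S - pr l) = {}} = insert l ?FR"
      using l pr_disj[of _ l] by auto
    have nl: "l \<notin> ?FR" using l pr_ne[of l] by auto
    have "(S - pr l) \<union> pr l = S" using l by auto
    then show ?thesis unfolding e using nl by (simp add: sum.insert G_def)
  qed
  have "lapF n (fmul (Tf n) W) S = -4 * (\<Sum>j\<in>?FR. fmul (Tf n) W (S \<union> pr j))"
    by (simp add: lapF_def)
  also have "\<dots> = -4 * (\<Sum>j\<in>?FR. W S + (\<Sum>l\<in>?FU. G j l))"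
  proof (rule arg_cong[where f="\<lambda>x. -4 * x"], rule sum.cong[OF refl])
    fix j assume "j \<in> ?FR"
    then show "fmul (Tf n) W (S \<union> pr j) = W S + (\<Sum>l\<in>?FU. G j l)"
      using a[OF \<open>j \<in> ?FR\<close>] by (simp only: fmul_Tf[OF assms])
  qed
  also have "\<dots> = -4 * (real (card ?FR) * W S + (\<Sum>j\<in>?FR. \<Sum>l\<in>?FU. G j l))"
    by (simp add: sum.distrib)
  finally have L: "lapF n (fmul (Tf n) W) S = -4 * (real (card ?FR) * W S + (\<Sum>j\<in>?FR. \<Sum>l\<in>?FU. G j l))" .
  have "fmul (Tf n) (lapF n W) S = (\<Sum>l\<in>?FU. lapF n W (S - pr l))"
    by (rule fmul_Tf[OF ffin_lapF[OF assms]])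
  also have "\<dots> = (\<Sum>l\<in>?FU. -4 * (W S + (\<Sum>j\<in>?FR. G j l)))"
  proof (rule sum.cong[OF refl])
    fix l assume "l \<in> ?FU"
    then show "lapF n W (S - pr l) = -4 * (W S + (\<Sum>j\<in>?FR. G j l))"
      using b[OF \<open>l \<in> ?FU\<close>] by (simp only: lapF_def)
  qed
  also have "\<dots> = -4 * (real (card ?FU) * W S + (\<Sum>l\<in>?FU. \<Sum>j\<in>?FR. G j l))"
    by (subst sum_distrib_left[symmetric]) (simp add: sum.distrib)
  finally have R: "fmul (Tf n) (lapF n W) S = -4 * (real (card ?FU) * W S + (\<Sum>l\<in>?FU. \<Sum>j\<in>?FR. G j l))" .
  have sw: "(\<Sum>l\<in>?FU. \<Sum>j\<in>?FR. G j l) = (\<Sum>j\<in>?FR. \<Sum>l\<in>?FU. G j l)" by (rule sum.swap)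
  show ?thesis unfolding L R sw by (simp add: algebra_simps)
qed


definition tens :: "((nat \<Rightarrow> nat) \<Rightarrow> real) \<Rightarrow> (nat set \<Rightarrow> real) \<Rightarrow> spoly" where
  "tens A W = (\<lambda>\<alpha> S. A \<alpha> * W S)"

lemma smul_tens: "smul (tens A W) (tens B Z) = tens (bmul A B) (fmul W Z)"
  unfolding smul_def tens_def bmul_def fmul_def Dset_def
  apply (intro ext)
  apply (simp add: sum_product ac_simps)
  by (rule sum.swap)

lemma xsq_tens: "xsq m = tens (Xb m) one_f"
  by (intro ext) (simp add: xsq_def tens_def Xb_def one_f_def)

lemma thsq_tens: "thsq n = tens delta0 (Tf n)"
  by (intro ext) (simp add: thsq_def tens_def delta0_def Tf_def)

lemma sone_tens: "sone = tens delta0 one_f"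
  by (intro ext) (simp add: sone_def tens_def delta0_def one_f_def)

fun bp :: "nat \<Rightarrow> nat \<Rightarrow> (nat \<Rightarrow> nat) \<Rightarrow> real" where
  "bp m 0 = delta0"
| "bp m (Suc r) = bmul (Xb m) (bp m r)"

fun fp :: "nat \<Rightarrow> nat \<Rightarrow> nat set \<Rightarrow> real" where
  "fp n 0 = one_f"
| "fp n (Suc l) = fmul (Tf n) (fp n l)"

lemma binf_bp: "binf (bp m r)"
  by (cases r) (simp_all add: binf_delta0 binf_bmul)

lemma ffin_fp: "ffin (fp n l)"
  by (cases l) (simp_all add: ffin_one_f ffin_fmul)

lemma spow_xsq: "spow (xsq m) r = tens (bp m r) one_f"
  by (induction r) (simp_all add: sone_tens xsq_tens smul_tens fmul_one_left ffin_one_f bmul_delta0_left binf_delta0)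

lemma spow_thsq: "spow (thsq n) l = tens delta0 (fp n l)"
  by (induction l) (simp_all add: sone_tens thsq_tens smul_tens bmul_delta0_left binf_delta0)

lemma fpoly_eq: "fpoly m n a k = (\<lambda>\<alpha> S. \<Sum>i\<le>k. a i * tens (bp m (k - i)) (fp n i) \<alpha> S)"
proof -
  have "smul (spow (xsq m) (k - i)) (spow (thsq n) i) = tens (bp m (k - i)) (fp n i)" for i
    by (simp add: spow_xsq spow_thsq smul_tens bmul_delta0_right binf_bp fmul_one_left ffin_fp)
  then show ?thesis by (simp add: fpoly_def)
qed

lemma smul_sum_left:
  "smul (\<lambda>\<alpha> S. \<Sum>i\<in>I. c i * F i \<alpha> S) G = (\<lambda>\<gamma> U. \<Sum>i\<in>I. c i * smul (F i) G \<gamma> U)"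
proof (intro ext)
  fix \<gamma> U
  have "smul (\<lambda>\<alpha> S. \<Sum>i\<in>I. c i * F i \<alpha> S) G \<gamma> U =
    (\<Sum>\<alpha>\<in>{\<alpha>. \<forall>i. \<alpha> i \<le> \<gamma> i}. \<Sum>S\<in>Pow U. \<Sum>i\<in>I. c i * (gsign S (U - S) * F i \<alpha> S * G (\<lambda>i. \<gamma> i - \<alpha> i) (U - S)))"
    by (simp add: smul_def sum_distrib_left sum_distrib_right ac_simps)
  also have "\<dots> = (\<Sum>\<alpha>\<in>{\<alpha>. \<forall>i. \<alpha> i \<le> \<gamma> i}. \<Sum>i\<in>I. \<Sum>S\<in>Pow U. c i * (gsign S (U - S) * F i \<alpha> S * G (\<lambda>i. \<gamma> i - \<alpha> i) (U - S)))"
    by (rule sum.cong[OF refl]) (rule sum.swap)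
  also have "\<dots> = (\<Sum>i\<in>I. \<Sum>\<alpha>\<in>{\<alpha>. \<forall>i. \<alpha> i \<le> \<gamma> i}. \<Sum>S\<in>Pow U. c i * (gsign S (U - S) * F i \<alpha> S * G (\<lambda>i. \<gamma> i - \<alpha> i) (U - S)))"
    by (rule sum.swap)
  also have "\<dots> = (\<Sum>i\<in>I. c i * smul (F i) G \<gamma> U)"
    by (simp add: smul_def sum_distrib_left)
  finally show "smul (\<lambda>\<alpha> S. \<Sum>i\<in>I. c i * F i \<alpha> S) G \<gamma> U = (\<Sum>i\<in>I. c i * smul (F i) G \<gamma> U)" .
qed

definition hpart :: "spoly \<Rightarrow> (nat \<Rightarrow> nat) \<Rightarrow> real" where "hpart h = (\<lambda>\<alpha>. h \<alpha> {})"
definition gpart :: "spoly \<Rightarrow> nat set \<Rightarrow> real" where "gpart g = (\<lambda>S. g (\<lambda>_. 0) S)"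

lemma Hb_tens: "h \<in> Hb m n p \<Longrightarrow> h = tens (hpart h) one_f"
  by (intro ext) (auto simp: Hb_def tens_def hpart_def one_f_def)

lemma Hf_tens: "g \<in> Hf m n q \<Longrightarrow> g = tens delta0 (gpart g)"
  by (intro ext) (auto simp: Hf_def tens_def gpart_def delta0_def)

definition Yf :: "nat \<Rightarrow> ((nat \<Rightarrow> nat) \<Rightarrow> real) \<Rightarrow> nat \<Rightarrow> (nat \<Rightarrow> nat) \<Rightarrow> real" where
  "Yf m hb r = bmul (bp m r) hb"
definition Zf :: "nat \<Rightarrow> (nat set \<Rightarrow> real) \<Rightarrow> nat \<Rightarrow> nat set \<Rightarrow> real" where
  "Zf n gf l = fmul (fp n l) gf"

lemma decomp:
  assumes "h \<in> Hb m n p" "g \<in> Hf m n q"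
  shows "smul (smul (fpoly m n a k) h) g = (\<lambda>\<alpha> S. \<Sum>i\<le>k. a i * tens (Yf m (hpart h) (k - i)) (Zf n (gpart g) i) \<alpha> S)"
proof -
  have "smul (fpoly m n a k) h = (\<lambda>\<alpha> S. \<Sum>i\<le>k. a i * tens (Yf m (hpart h) (k - i)) (fp n i) \<alpha> S)"
    apply (subst Hb_tens[OF assms(1)])
    apply (simp only: fpoly_eq smul_sum_left smul_tens)
    by (simp add: Yf_def fmul_one_right ffin_fp)
  then show ?thesis
    apply (subst Hf_tens[OF assms(2)])
    apply (simp only: smul_sum_left smul_tens)
    by (simp add: Zf_def bmul_delta0_right binf_bmul Yf_def)
qed


lemma ddx: "dx j (dx j F) \<alpha> S = (real (\<alpha> j) + 1) * (real (\<alpha> j) + 2) * F (\<alpha>(j := \<alpha> j + 2)) S"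
  by (simp add: dx_def algebra_simps)

lemma lap_b_eq: "lap_b m F \<alpha> S = - (\<Sum>j=1..m. (real (\<alpha> j) + 1) * (real (\<alpha> j) + 2) * F (\<alpha>(j := \<alpha> j + 2)) S)"
  by (simp add: lap_b_def ddx)

lemma ddth:
  assumes "1 \<le> j"
  shows "dth (2*j - 1) (dth (2*j) F) \<alpha> S = (if pr j \<inter> S = {} then - F \<alpha> (S \<union> pr j) else 0)"
proof (cases "2*j - 1 \<in> S")
  case True then show ?thesis by (auto simp: dth_def pr_def)
next
  case n1: False
  show ?thesis
  proof (cases "2*j \<in> S")
    case True then show ?thesis using n1 by (auto simp: dth_def pr_def)
  next
    case n2: False
    have ne: "2*j \<noteq> 2*j - 1" using assms by auto
    have e1: "{s \<in> insert (2*j - 1) S. s < 2*j} = insert (2*j - 1) {s\<in>S. s < 2*j - 1}"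
    proof -
      have "s \<in> S \<Longrightarrow> s < 2*j \<Longrightarrow> s < 2*j - 1" for s
        using n1 by (cases "s = 2*j - 1") auto
      then show ?thesis using assms by auto
    qed
    have c: "card {s \<in> insert (2*j - 1) S. s < 2*j} = Suc (card {s\<in>S. s < 2*j - 1})"
      unfolding e1 by (rule card_insert_disjoint) auto
    have e2: "insert (2*j) (insert (2*j - 1) S) = S \<union> pr j" by (auto simp: pr_def)
    have "pr j \<inter> S = {}" using n1 n2 by (auto simp: pr_def)
    have c2: "card {s. (s = 2 * j - Suc 0 \<or> s \<in> S) \<and> s < 2 * j} = Suc (card {s\<in>S. s < 2*j - 1})"
      using c by simp
    have e3: "insert (2 * j) (insert (2 * j - Suc 0) S) = S \<union> pr j" using e2 by simp
    then show ?thesis using n1 n2 ne \<open>pr j \<inter> S = {}\<close>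
      by (simp add: dth_def c2 e3)
  qed
qed

lemma lap_f_eq: "lap_f n F \<alpha> S = -4 * (\<Sum>j\<in>{j\<in>{1..n}. pr j \<inter> S = {}}. F \<alpha> (S \<union> pr j))"
proof -
  have "lap_f n F \<alpha> S = 4 * (\<Sum>j=1..n. if pr j \<inter> S = {} then - F \<alpha> (S \<union> pr j) else 0)"
    unfolding lap_f_def by (rule arg_cong[where f="\<lambda>x. 4*x"], rule sum.cong[OF refl], rule ddth) simp
  also have "\<dots> = -4 * (\<Sum>j\<in>{j\<in>{1..n}. pr j \<inter> S = {}}. F \<alpha> (S \<union> pr j))"
  proof -
    have "(\<Sum>j\<in>{j\<in>{1..n}. pr j \<inter> S = {}}. F \<alpha> (S \<union> pr j)) = (\<Sum>j=1..n. if pr j \<inter> S = {} then F \<alpha> (S \<union> pr j) else 0)"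
      by (simp only: sum.inter_filter[OF finite_atLeastAtMost])
    moreover have "(\<Sum>j=1..n. if pr j \<inter> S = {} then - F \<alpha> (S \<union> pr j) else 0) = - (\<Sum>j=1..n. if pr j \<inter> S = {} then F \<alpha> (S \<union> pr j) else 0)"
      by (subst sum_negf[symmetric]) (rule sum.cong, auto)
    ultimately show ?thesis by simp
  qed
  finally show ?thesis .
qed

lemma super_lap_tens:
  "super_lap m n (tens B W) = (\<lambda>\<alpha> S. lapB m B \<alpha> * W S + B \<alpha> * lapF n W S)"
  by (intro ext) (simp add: super_lap_def lap_b_eq lap_f_eq lapB_def lapF_def tens_def sum_distrib_left sum_distrib_right ac_simps)

lemma super_lap_sum:
  "super_lap m n (\<lambda>\<alpha> S. \<Sum>i\<in>I. c i * F i \<alpha> S) = (\<lambda>\<alpha> S. \<Sum>i\<in>I. c i * super_lap m n (F i) \<alpha> S)"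
proof (intro ext)
  fix \<alpha> S
  have b: "lap_b m (\<lambda>\<alpha> S. \<Sum>i\<in>I. c i * F i \<alpha> S) \<alpha> S = (\<Sum>i\<in>I. c i * lap_b m (F i) \<alpha> S)"
    unfolding lap_b_eq by (simp add: sum_distrib_left sum_distrib_right sum_negf ac_simps) (rule sum.swap)
  have f: "lap_f n (\<lambda>\<alpha> S. \<Sum>i\<in>I. c i * F i \<alpha> S) \<alpha> S = (\<Sum>i\<in>I. c i * lap_f n (F i) \<alpha> S)"
    unfolding lap_f_eq by (simp add: sum_distrib_left sum_distrib_right ac_simps) (rule sum.swap)
  show "super_lap m n (\<lambda>\<alpha> S. \<Sum>i\<in>I. c i * F i \<alpha> S) \<alpha> S = (\<Sum>i\<in>I. c i * super_lap m n (F i) \<alpha> S)"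
    by (simp add: super_lap_def b f sum.distrib distrib_left)
qed


lemma bmul_scale: "bmul A (\<lambda>\<gamma>. c * B \<gamma>) = (\<lambda>\<gamma>. c * bmul A B \<gamma>)"
  by (simp add: bmul_def sum_distrib_left ac_simps)

lemma fmul_scale: "fmul W (\<lambda>S. c * Z S) = (\<lambda>S. c * fmul W Z S)"
  by (simp add: fmul_def sum_distrib_left ac_simps)

lemma sum_upd:
  fixes \<gamma> :: "nat \<Rightarrow> nat"
  assumes "i \<in> {1..m}"
  shows "(\<Sum>l=1..m. (\<gamma>(i := v)) l) + \<gamma> i = (\<Sum>l=1..m. \<gamma> l) + (v::nat)"
proof -
  have "(\<Sum>l=1..m. (\<gamma>(i := v)) l) = (\<gamma>(i := v)) i + (\<Sum>l\<in>{1..m} - {i}. (\<gamma>(i := v)) l)"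
    by (rule sum.remove) (use assms in auto)
  also have "\<dots> = v + (\<Sum>l\<in>{1..m} - {i}. \<gamma> l)"
  proof -
    have "sum (\<gamma>(i := v)) ({1..m} - {i}) = sum \<gamma> ({1..m} - {i})" by (rule sum.cong) auto
    then show ?thesis by simp
  qed
  finally have "(\<Sum>l=1..m. (\<gamma>(i := v)) l) = v + (\<Sum>l\<in>{1..m} - {i}. \<gamma> l)" .
  moreover have "(\<Sum>l=1..m. \<gamma> l) = \<gamma> i + (\<Sum>l\<in>{1..m} - {i}. \<gamma> l)"
    using assms by (simp add: sum.remove)
  ultimately show ?thesis by simp
qed

locale hb_props =
  fixes m p :: nat and hb :: "(nat \<Rightarrow> nat) \<Rightarrow> real"
  assumes hb_binf: "binf hb"
    and hb_hom: "\<And>\<alpha>. hb \<alpha> \<noteq> 0 \<Longrightarrow> (\<Sum>i=1..m. \<alpha> i) = p"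
    and hb_lap: "\<And>\<alpha>. lapB m hb \<alpha> = 0"
begin

definition cB :: "nat \<Rightarrow> real" where
  "cB r = 2 * real r * (real m + 2 * real p + 2 * real r - 2)"

lemma Y0: "Yf m hb 0 = hb"
  by (simp add: Yf_def bmul_delta0_left hb_binf)

lemma YSuc: "Yf m hb (Suc r) = bmul (Xb m) (Yf m hb r)"
  by (simp add: Yf_def bmul_assoc)

lemma Y_binf: "binf (Yf m hb r)"
  by (cases r) (simp_all add: Y0 YSuc hb_binf binf_bmul)

lemma Y_hom: "Yf m hb r \<gamma> \<noteq> 0 \<Longrightarrow> (\<Sum>i=1..m. \<gamma> i) = p + 2 * r"
proof (induction r arbitrary: \<gamma>)
  case 0 then show ?case using hb_hom by (simp add: Y0)
next
  case (Suc r)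
  then have "(\<Sum>i=1..m. if 2 \<le> \<gamma> i then Yf m hb r (\<gamma>(i := \<gamma> i - 2)) else 0) \<noteq> 0"
    by (simp add: YSuc bmul_Xb[OF Y_binf])
  then obtain i where "i \<in> {1..m}" "(if 2 \<le> \<gamma> i then Yf m hb r (\<gamma>(i := \<gamma> i - 2)) else 0) \<noteq> 0"
    by (rule sum.not_neutral_contains_not_neutral)
  then have i: "i \<in> {1..m}" "2 \<le> \<gamma> i" "Yf m hb r (\<gamma>(i := \<gamma> i - 2)) \<noteq> 0"
    by (simp_all split: if_splits)
  have "(\<Sum>l=1..m. (\<gamma>(i := \<gamma> i - 2)) l) = p + 2 * r" using Suc.IH i(3) by blast
  moreover have "(\<Sum>l=1..m. (\<gamma>(i := \<gamma> i - 2)) l) + \<gamma> i = (\<Sum>l=1..m. \<gamma> l) + (\<gamma> i - 2)"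
    using sum_upd[OF i(1)] .
  ultimately show ?case using i(2) by simp
qed

lemma Y_lap: "lapB m (Yf m hb r) \<gamma> = cB r * Yf m hb (r - 1) \<gamma>"
proof (induction r arbitrary: \<gamma>)
  case 0 then show ?case by (simp add: Y0 hb_lap cB_def)
next
  case (Suc r)
  have IH: "lapB m (Yf m hb r) = (\<lambda>\<gamma>. cB r * Yf m hb (r - 1) \<gamma>)" using Suc.IH by blast
  have s: "(4 * (\<Sum>j=1..m. real (\<gamma> j)) + 2 * real m) * Yf m hb r \<gamma> = (4 * (real p + 2 * real r) + 2 * real m) * Yf m hb r \<gamma>"
  proof (cases "Yf m hb r \<gamma> = 0")
    case False
    then have "(\<Sum>j=1..m. \<gamma> j) = p + 2 * r" by (rule Y_hom)
    then have "real (\<Sum>j=1..m. \<gamma> j) = real p + 2 * real r" by simp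
    then have "(\<Sum>j=1..m. real (\<gamma> j)) = real p + 2 * real r" by (simp add: of_nat_sum)
    then show ?thesis by simp
  qed simp
  have t: "bmul (Xb m) (lapB m (Yf m hb r)) \<gamma> = cB r * Yf m hb r \<gamma>"
  proof (cases r)
    case 0 then show ?thesis using IH by (simp add: bmul_def cB_def)
  next
    case (Suc r') then show ?thesis using IH by (simp add: bmul_scale YSuc[symmetric])
  qed
  have "lapB m (Yf m hb (Suc r)) \<gamma> = (4 * (real p + 2 * real r) + 2 * real m + cB r) * Yf m hb r \<gamma>"
    unfolding YSuc lapB_bmul_Xb[OF Y_binf] s t by (simp add: algebra_simps)
  also have "4 * (real p + 2 * real r) + 2 * real m + cB r = cB (Suc r)"
    by (simp add: cB_def algebra_simps)
  finally show ?case by simp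
qed

lemma Y_nz: "hb \<noteq> (\<lambda>_. 0) \<Longrightarrow> 0 < m \<Longrightarrow> Yf m hb r \<noteq> (\<lambda>_. 0)"
proof (induction r)
  case 0 then show ?case by (simp add: Y0)
next
  case (Suc r)
  show ?case
  proof
    assume z: "Yf m hb (Suc r) = (\<lambda>_. 0)"
    have c: "cB (Suc r) \<noteq> 0" using Suc.prems by (simp add: cB_def)
    have "Yf m hb r \<gamma> = 0" for \<gamma>
    proof -
      have "lapB m (Yf m hb (Suc r)) \<gamma> = 0" unfolding z by (simp add: lapB_def)
      then show ?thesis using Y_lap[of "Suc r" \<gamma>] c by simp
    qed
    then show False using Suc by auto
  qed
qed

end

locale gf_props =
  fixes n q :: nat and gf :: "nat set \<Rightarrow> real"
  assumes gf_supp: "\<And>S. gf S \<noteq> 0 \<Longrightarrow> S \<subseteq> {1..2*n} \<and> card S = q"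
    and gf_lap: "\<And>S. lapF n gf S = 0"
begin

lemma gf_ffin: "ffin gf"
  unfolding ffin_def
proof (intro allI impI)
  fix U :: "nat set" assume inf: "infinite U"
  show "gf U = 0"
  proof (rule ccontr)
    assume "gf U \<noteq> 0"
    then have "U \<subseteq> {1..2*n}" using gf_supp by blast
    then have "finite U" by (rule finite_subset) simp
    then show False using inf by simp
  qed
qed

definition dF :: "nat \<Rightarrow> real" where
  "dF l = -4 * real l * (real n - real q - real l + 1)"

lemma Z0: "Zf n gf 0 = gf"
  by (simp add: Zf_def fmul_one_left gf_ffin)

lemma ZSuc: "Zf n gf (Suc l) = fmul (Tf n) (Zf n gf l)"
  by (simp add: Zf_def fmul_assoc)

lemma Z_ffin: "ffin (Zf n gf l)"
  by (cases l) (simp_all add: Z0 ZSuc gf_ffin ffin_fmul)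

lemma Z_supp: "Zf n gf l S \<noteq> 0 \<Longrightarrow> S \<subseteq> {1..2*n} \<and> card S = q + 2 * l"
proof (induction l arbitrary: S)
  case 0 then show ?case using gf_supp by (simp add: Z0)
next
  case (Suc l)
  then have "(\<Sum>j\<in>{j\<in>{1..n}. pr j \<subseteq> S}. Zf n gf l (S - pr j)) \<noteq> 0"
    by (simp add: ZSuc fmul_Tf[OF Z_ffin])
  then obtain j where "j \<in> {j\<in>{1..n}. pr j \<subseteq> S}" "Zf n gf l (S - pr j) \<noteq> 0"
    by (rule sum.not_neutral_contains_not_neutral)
  then have j: "j \<in> {1..n}" "pr j \<subseteq> S" "Zf n gf l (S - pr j) \<noteq> 0" by auto
  have h: "S - pr j \<subseteq> {1..2*n}" "card (S - pr j) = q + 2 * l" using Suc.IH j(3) by blast+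
  have pj: "pr j \<subseteq> {1..2*n}" using j(1) by (auto simp: pr_def)
  have S: "S = (S - pr j) \<union> pr j" using j(2) by auto
  have fin: "finite (S - pr j)" using h(1) finite_subset by blast
  have cpr: "card (pr j) = 2" using j(1) by (auto simp: pr_def)
  have "card S = card (S - pr j) + card (pr j)"
    by (subst S, rule card_Un_disjoint) (use fin in auto)
  then show ?case using h pj cpr S by auto
qed

lemma Z_lap: "lapF n (Zf n gf l) S = dF l * Zf n gf (l - 1) S"
proof (induction l arbitrary: S)
  case 0 then show ?case by (simp add: Z0 gf_lap dF_def)
next
  case (Suc l)
  have IH: "lapF n (Zf n gf l) = (\<lambda>S. dF l * Zf n gf (l - 1) S)" using Suc.IH by blast
  have s: "4 * (real (card {j\<in>{1..n}. pr j \<inter> S = {}}) - real (card {j\<in>{1..n}. pr j \<subseteq> S})) * Zf n gf l S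
        = 4 * (real n - real q - 2 * real l) * Zf n gf l S"
  proof (cases "Zf n gf l S = 0")
    case False
    then have "S \<subseteq> {1..2*n}" "card S = q + 2 * l" using Z_supp by blast+
    then have e: "real (card {j\<in>{1..n}. pr j \<inter> S = {}}) - real (card {j\<in>{1..n}. pr j \<subseteq> S}) = real n - real q - 2 * real l"
      using card_FR_FU[of S n] by simp
    show ?thesis by (simp only: e)
  qed simp
  have t: "fmul (Tf n) (lapF n (Zf n gf l)) S = dF l * Zf n gf l S"
  proof (cases l)
    case 0 then show ?thesis using IH by (simp add: fmul_def dF_def)
  next
    case (Suc l') then show ?thesis using IH by (simp add: fmul_scale ZSuc[symmetric])
  qed
  have "lapF n (Zf n gf (Suc l)) S = (dF l - 4 * (real n - real q - 2 * real l)) * Zf n gf l S"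
    unfolding ZSuc lapF_fmul_Tf[OF Z_ffin] t s by (simp add: algebra_simps)
  also have "dF l - 4 * (real n - real q - 2 * real l) = dF (Suc l)"
    by (simp add: dF_def algebra_simps)
  finally show ?case by simp
qed

lemma Z_nz: "gf \<noteq> (\<lambda>_. 0) \<Longrightarrow> l \<le> n - q \<Longrightarrow> q \<le> n \<Longrightarrow> Zf n gf l \<noteq> (\<lambda>_. 0)"
proof (induction l)
  case 0 then show ?case by (simp add: Z0)
next
  case (Suc l)
  show ?case
  proof
    assume z: "Zf n gf (Suc l) = (\<lambda>_. 0)"
    have c: "dF (Suc l) \<noteq> 0" using Suc.prems by (simp add: dF_def)
    have "Zf n gf l S = 0" for S
    proof -
      have "lapF n (Zf n gf (Suc l)) S = 0" unfolding z by (simp add: lapF_def)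
      then show ?thesis using Z_lap[of "Suc l" S] c by simp
    qed
    then show False using Suc by auto
  qed
qed

end


definition cc :: "nat \<Rightarrow> nat \<Rightarrow> nat \<Rightarrow> real" where
  "cc m p r = 2 * real r * (real m + 2 * real p + 2 * real r - 2)"
definition dd :: "nat \<Rightarrow> nat \<Rightarrow> nat \<Rightarrow> real" where
  "dd n q l = -4 * real l * (real n - real q - real l + 1)"

lemma lap_sum:
  assumes "hb_props m p hb" "gf_props n q gf"
  shows "super_lap m n (\<lambda>\<alpha> S. \<Sum>i\<le>k. a i * tens (Yf m hb (k - i)) (Zf n gf i) \<alpha> S)
    = (\<lambda>\<alpha> S. \<Sum>j<k. (a j * cc m p (k - j) + a (Suc j) * dd n q (Suc j)) * (Yf m hb (k - Suc j) \<alpha> * Zf n gf j S))"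
proof (intro ext)
  fix \<alpha> S
  interpret H: hb_props m p hb by fact
  interpret G: gf_props n q gf by fact
  have cB: "H.cB r = cc m p r" for r by (simp add: H.cB_def cc_def)
  have dF: "G.dF l = dd n q l" for l by (simp add: G.dF_def dd_def)
  let ?Y = "Yf m hb" and ?Z = "Zf n gf"
  have "super_lap m n (\<lambda>\<alpha> S. \<Sum>i\<le>k. a i * tens (?Y (k - i)) (?Z i) \<alpha> S) \<alpha> S
     = (\<Sum>i\<le>k. a i * (cc m p (k - i) * ?Y (k - i - 1) \<alpha> * ?Z i S + dd n q i * ?Y (k - i) \<alpha> * ?Z (i - 1) S))"
    by (simp add: super_lap_sum super_lap_tens H.Y_lap G.Z_lap cB dF ac_simps)
  also have "\<dots> = (\<Sum>i\<le>k. a i * cc m p (k - i) * (?Y (k - Suc i) \<alpha> * ?Z i S))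
                 + (\<Sum>i\<le>k. a i * dd n q i * (?Y (k - i) \<alpha> * ?Z (i - 1) S))"
    by (simp add: sum.distrib algebra_simps)
  also have "(\<Sum>i\<le>k. a i * cc m p (k - i) * (?Y (k - Suc i) \<alpha> * ?Z i S))
           = (\<Sum>i<k. a i * cc m p (k - i) * (?Y (k - Suc i) \<alpha> * ?Z i S))"
    by (simp add: lessThan_Suc_atMost[symmetric] cc_def)
  also have "(\<Sum>i\<le>k. a i * dd n q i * (?Y (k - i) \<alpha> * ?Z (i - 1) S))
           = (\<Sum>j<k. a (Suc j) * dd n q (Suc j) * (?Y (k - Suc j) \<alpha> * ?Z j S))"
  proof (cases k)
    case 0 then show ?thesis by (simp add: dd_def)
  next
    case (Suc k')
    then show ?thesis
      by (simp only: sum.atMost_Suc_shift lessThan_Suc_atMost) (simp add: dd_def)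
  qed
  finally show "super_lap m n (\<lambda>\<alpha> S. \<Sum>i\<le>k. a i * tens (?Y (k - i)) (?Z i) \<alpha> S) \<alpha> S
     = (\<Sum>j<k. (a j * cc m p (k - j) + a (Suc j) * dd n q (Suc j)) * (?Y (k - Suc j) \<alpha> * ?Z j S))"
    by (simp add: sum.distrib[symmetric] algebra_simps)
qed

lemma collapse:
  assumes "finite I" "j0 \<in> I" "\<And>i. i \<in> I \<Longrightarrow> i \<noteq> j0 \<Longrightarrow> f i = (0::real)"
  shows "(\<Sum>i\<in>I. f i) = f j0"
proof -
  have "(\<Sum>i\<in>I. f i) = f j0 + (\<Sum>i\<in>I - {j0}. f i)" by (rule sum.remove) (use assms in auto)
  also have "(\<Sum>i\<in>I - {j0}. f i) = 0" by (rule sum.neutral) (use assms in auto)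
  finally show ?thesis by simp
qed

lemma Hb_props:
  assumes "h \<in> Hb m n p" shows "hb_props m p (hpart h)"
proof
  have ok: "sp_ok m n h" and sup: "\<And>\<alpha> S. h \<alpha> S \<noteq> 0 \<Longrightarrow> S = {} \<and> (\<Sum>i=1..m. \<alpha> i) = p"
    and lap: "lap_b m h = szero" using assms by (auto simp: Hb_def)
  show "binf (hpart h)"
    unfolding binf_def
  proof (intro allI impI)
    fix \<gamma> :: "nat \<Rightarrow> nat" assume inf: "infinite {i. \<gamma> i \<noteq> 0}"
    show "hpart h \<gamma> = 0"
    proof (rule ccontr)
      assume "hpart h \<gamma> \<noteq> 0"
      then have "\<forall>i. i \<notin> {1..m} \<longrightarrow> \<gamma> i = 0" using ok by (auto simp: sp_ok_def hpart_def)
      then have "{i. \<gamma> i \<noteq> 0} \<subseteq> {1..m}" by auto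
      then show False using inf finite_subset by blast
    qed
  qed
  show "hpart h \<alpha> \<noteq> 0 \<Longrightarrow> (\<Sum>i=1..m. \<alpha> i) = p" for \<alpha> using sup by (simp add: hpart_def)
  show "lapB m (hpart h) \<alpha> = 0" for \<alpha>
    using fun_cong[OF fun_cong[OF lap, of \<alpha>], of "{}"] by (simp add: lap_b_eq lapB_def hpart_def szero_def)
qed

lemma Hf_props:
  assumes "g \<in> Hf m n q" shows "gf_props n q (gpart g)"
proof
  have ok: "sp_ok m n g" and sup: "\<And>\<alpha> S. g \<alpha> S \<noteq> 0 \<Longrightarrow> \<alpha> = (\<lambda>_. 0) \<and> card S = q"
    and lap: "lap_f n g = szero" using assms by (auto simp: Hf_def)
  show "gpart g S \<noteq> 0 \<Longrightarrow> S \<subseteq> {1..2*n} \<and> card S = q" for S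
    using ok sup by (auto simp: sp_ok_def gpart_def)
  show "lapF n (gpart g) S = 0" for S
    using fun_cong[OF fun_cong[OF lap, of "\<lambda>_. 0"], of S] by (simp add: lap_f_eq lapF_def gpart_def szero_def)
qed

lemma szero_Hb: "szero \<in> Hb m n p"
  by (simp add: Hb_def sp_ok_def szero_def lap_b_def dx_def)

definition S0 :: "nat \<Rightarrow> nat set" where "S0 q = (\<lambda>i. 2*i - 1) ` {1..q}"
definition g0 :: "nat \<Rightarrow> spoly" where
  "g0 q = (\<lambda>\<alpha> S. if \<alpha> = (\<lambda>_. 0) \<and> S = S0 q then 1 else 0)"

lemma card_S0: "card (S0 q) = q"
proof -
  have "inj_on (\<lambda>i. 2*i - 1) {1..q}" by (rule inj_onI) auto
  then show ?thesis by (simp add: S0_def card_image)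
qed

lemma g0_Hf:
  assumes "q < n" shows "g0 q \<in> Hf m n q"
proof -
  have sub: "S0 q \<subseteq> {1..2*n}" using assms by (auto simp: S0_def)
  have fin: "{(\<alpha>, S). g0 q \<alpha> S \<noteq> 0} = {((\<lambda>_. 0), S0 q)}" by (auto simp: g0_def)
  have ok: "sp_ok m n (g0 q)" unfolding sp_ok_def using sub by (auto simp: fin g0_def)
  have lap: "lap_f n (g0 q) = szero"
  proof (intro ext)
    fix \<alpha> S
    have "g0 q \<alpha> (S \<union> pr j) = 0" if "j \<in> {1..n}" for j
    proof -
      have "2*j \<in> S \<union> pr j" by (simp add: pr_def)
      moreover have "2*j \<notin> S0 q" by (auto simp: S0_def) presburger
      ultimately show ?thesis by (auto simp: g0_def)
    qed
    then show "lap_f n (g0 q) \<alpha> S = szero \<alpha> S" by (simp add: lap_f_eq szero_def)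
  qed
  show ?thesis using ok lap card_S0 by (auto simp: Hf_def g0_def)
qed

lemma gpart_g0: "gpart (g0 q) \<noteq> (\<lambda>_. 0)"
proof
  assume "gpart (g0 q) = (\<lambda>_. 0)"
  then have "gpart (g0 q) (S0 q) = 0" by simp
  then show False by (simp add: gpart_def g0_def)
qed


fun aseq :: "nat \<Rightarrow> nat \<Rightarrow> nat \<Rightarrow> nat \<Rightarrow> nat \<Rightarrow> nat \<Rightarrow> real" where
  "aseq m n p q k 0 = fact (n - q) / Gamma (real m / 2 + real p + real k)"
| "aseq m n p q k (Suc j) = (if j < k then aseq m n p q k j * cc m p (k - j) / (4 * real (Suc j) * (real n - real q - real j)) else 0)"

lemma lap_term:
  assumes "h \<in> Hb m n p" "g \<in> Hf m n q"
  shows "super_lap m n (smul (smul (fpoly m n a k) h) g)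
    = (\<lambda>\<alpha> S. \<Sum>j<k. (a j * cc m p (k - j) + a (Suc j) * dd n q (Suc j)) * (Yf m (hpart h) (k - Suc j) \<alpha> * Zf n (gpart g) j S))"
  unfolding decomp[OF assms] by (rule lap_sum[OF Hb_props[OF assms(1)] Hf_props[OF assms(2)]])

lemma in_fspan:
  assumes "h \<in> Hb m n p" "g \<in> Hf m n q"
  shows "smul (smul f h) g \<in> fspan m n f p q"
  unfolding fspan_def
  by (rule CollectI, rule exI[of _ 1], rule exI[of _ "\<lambda>_. h"], rule exI[of _ "\<lambda>_. g"]) (simp add: assms)

theorem mainTheorem4:
  fixes m n p q k :: nat
  assumes "0 < m" and "Hb m n p \<noteq> {szero}"
    and "q < n" and "k < n - q + 1"
  shows "\<exists>!a :: nat \<Rightarrow> real. (\<forall>i>k. a i = 0)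
     \<and> fspan m n (fpoly m n a k) p q \<noteq> {szero}
     \<and> (\<forall>F\<in>fspan m n (fpoly m n a k) p q. super_lap m n F = szero)
     \<and> a 0 = fact (n - q) / Gamma (real m / 2 + real p + real k)"
proof -
  obtain h0 where h0: "h0 \<in> Hb m n p" "h0 \<noteq> szero" using assms(2) szero_Hb by blast
  have hbnz: "hpart h0 \<noteq> (\<lambda>_. 0)"
  proof
    assume "hpart h0 = (\<lambda>_. 0)"
    then have "h0 = szero" using Hb_tens[OF h0(1)] by (simp add: tens_def szero_def)
    then show False using h0(2) by simp
  qed
  have g: "g0 q \<in> Hf m n q" by (rule g0_Hf[OF assms(3)])
  interpret H: hb_props m p "hpart h0" by (rule Hb_props[OF h0(1)])
  interpret G: gf_props n q "gpart (g0 q)" by (rule Hf_props[OF g])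
  let ?Y = "Yf m (hpart h0)" and ?Z = "Zf n (gpart (g0 q))"
  define e where "e b j = b j * cc m p (k - j) + b (Suc j) * dd n q (Suc j)" for b :: "nat \<Rightarrow> real" and j
  define A where "A = aseq m n p q k"
  have kq: "k \<le> n - q" using assms(4) by simp
  have den: "real n - real q - real j > 0" if "j < k" for j using that kq assms(3) by linarith
  have forced: "e b j = 0" if lap0: "super_lap m n (smul (smul (fpoly m n b k) h0) (g0 q)) = szero" and j: "j < k" for b j
  proof -
    obtain S where S: "?Z j S \<noteq> 0"
      using G.Z_nz[OF gpart_g0, of j] j kq assms(3) by (auto simp: fun_eq_iff)
    obtain \<gamma> where \<gamma>: "?Y (k - Suc j) \<gamma> \<noteq> 0"
      using H.Y_nz[OF hbnz assms(1), of "k - Suc j"] by (auto simp: fun_eq_iff)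
    have "(\<Sum>i<k. e b i * (?Y (k - Suc i) \<gamma> * ?Z i S)) = 0"
      using fun_cong[OF fun_cong[OF lap0, of \<gamma>], of S] unfolding lap_term[OF h0(1) g]
      by (simp add: szero_def e_def)
    moreover have "(\<Sum>i<k. e b i * (?Y (k - Suc i) \<gamma> * ?Z i S)) = e b j * (?Y (k - Suc j) \<gamma> * ?Z j S)"
    proof (rule collapse)
      fix i assume "i \<in> {..<k}" "i \<noteq> j"
      have "?Z i S = 0"
      proof (rule ccontr)
        assume "?Z i S \<noteq> 0"
        then have "card S = q + 2 * i" using G.Z_supp by blast
        moreover have "card S = q + 2 * j" using G.Z_supp S by blast
        ultimately show False using \<open>i \<noteq> j\<close> by simp
      qed
      then show "e b i * (?Y (k - Suc i) \<gamma> * ?Z i S) = 0" by simp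
    qed (use j in auto)
    ultimately show ?thesis using S \<gamma> by simp
  qed
  have eA: "e A j = 0" if "j < k" for j
  proof -
    have d: "dd n q (Suc j) = - (4 * real (Suc j) * (real n - real q - real j))" by (simp add: dd_def algebra_simps)
    have "4 * real (Suc j) * (real n - real q - real j) \<noteq> 0" using den[OF that] by simp
    then show ?thesis using that by (simp add: e_def A_def d field_simps)
  qed
  have A0: "A 0 = fact (n - q) / Gamma (real m / 2 + real p + real k)" by (simp add: A_def)
  have A0pos: "A 0 > 0"
  proof -
    have "real m / 2 + real p + real k > 0" using assms(1) by simp
    then have "Gamma (real m / 2 + real p + real k) > 0" by (rule Gamma_real_pos)
    then show ?thesis unfolding A0 by simp
  qed
  have Ak: "\<forall>i>k. A i = 0"
  proof (intro allI impI)
    fix i assume "k < i"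
    then obtain j where "i = Suc j" "\<not> j < k" by (cases i) auto
    then show "A i = 0" by (simp add: A_def)
  qed
  show ?thesis
  proof (rule ex1I[of _ A], intro conjI)
    show "\<forall>i>k. A i = 0" by (rule Ak)
    show "A 0 = fact (n - q) / Gamma (real m / 2 + real p + real k)" by (rule A0)
    show "fspan m n (fpoly m n A k) p q \<noteq> {szero}"
    proof
      assume sp: "fspan m n (fpoly m n A k) p q = {szero}"
      have z0: "smul (smul (fpoly m n A k) h0) (g0 q) = szero"
        using in_fspan[OF h0(1) g, of "fpoly m n A k"] sp by simp
      obtain S where S: "?Z 0 S \<noteq> 0" using G.Z_nz[OF gpart_g0, of 0] assms(3) by (auto simp: fun_eq_iff)
      obtain \<gamma> where \<gamma>: "?Y k \<gamma> \<noteq> 0" using H.Y_nz[OF hbnz assms(1), of k] by (auto simp: fun_eq_iff)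
      have "smul (smul (fpoly m n A k) h0) (g0 q) \<gamma> S = (\<Sum>i\<le>k. A i * (?Y (k - i) \<gamma> * ?Z i S))"
        by (simp add: decomp[OF h0(1) g] tens_def)
      also have "\<dots> = A 0 * (?Y (k - 0) \<gamma> * ?Z 0 S)"
      proof (rule collapse)
        fix i assume "i \<in> {..k}" "i \<noteq> 0"
        have "?Z i S = 0"
        proof (rule ccontr)
          assume "?Z i S \<noteq> 0"
          then have "card S = q + 2 * i" using G.Z_supp by blast
          moreover have "card S = q + 2 * 0" using G.Z_supp S by blast
          ultimately show False using \<open>i \<noteq> 0\<close> by simp
        qed
        then show "A i * (?Y (k - i) \<gamma> * ?Z i S) = 0" by simp
      next
        show "finite {..k}" by simp
      next
        show "0 \<in> {..k}" by simp
      qed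
      finally have "smul (smul (fpoly m n A k) h0) (g0 q) \<gamma> S \<noteq> 0" using S \<gamma> A0pos by simp
      then show False using z0 by (simp add: szero_def)
    qed
    show "\<forall>F\<in>fspan m n (fpoly m n A k) p q. super_lap m n F = szero"
    proof
      fix F assume "F \<in> fspan m n (fpoly m n A k) p q"
      then have "\<exists>(N::nat) hh gg. (\<forall>i<N. hh i \<in> Hb m n p \<and> gg i \<in> Hf m n q) \<and>
          F = (\<lambda>\<alpha> S. \<Sum>i<N. smul (smul (fpoly m n A k) (hh i)) (gg i) \<alpha> S)"
        by (simp add: fspan_def)
      then obtain N :: nat and hh gg where hg: "\<forall>i<N. hh i \<in> Hb m n p \<and> gg i \<in> Hf m n q"
        and F: "F = (\<lambda>\<alpha> S. \<Sum>i<N. smul (smul (fpoly m n A k) (hh i)) (gg i) \<alpha> S)"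
        by blast
      have F': "F = (\<lambda>\<alpha> S. \<Sum>i\<in>{..<N}. 1 * smul (smul (fpoly m n A k) (hh i)) (gg i) \<alpha> S)"
        unfolding F by simp
      have z: "super_lap m n (smul (smul (fpoly m n A k) (hh i)) (gg i)) = szero" if "i < N" for i
      proof -
        have "super_lap m n (smul (smul (fpoly m n A k) (hh i)) (gg i)) = (\<lambda>\<alpha> S. \<Sum>j<k. e A j * (Yf m (hpart (hh i)) (k - Suc j) \<alpha> * Zf n (gpart (gg i)) j S))"
          unfolding lap_term[OF hg[rule_format, OF that, THEN conjunct1] hg[rule_format, OF that, THEN conjunct2]] e_def ..
        also have "\<dots> = szero" using eA by (simp add: szero_def)
        finally show ?thesis .
      qed
      show "super_lap m n F = szero"
        unfolding F' super_lap_sum using z by (simp add: szero_def)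
    qed
  next
    fix b assume Pb: "(\<forall>i>k. b i = 0) \<and> fspan m n (fpoly m n b k) p q \<noteq> {szero}
       \<and> (\<forall>F\<in>fspan m n (fpoly m n b k) p q. super_lap m n F = szero)
       \<and> b 0 = fact (n - q) / Gamma (real m / 2 + real p + real k)"
    have lap0: "super_lap m n (smul (smul (fpoly m n b k) h0) (g0 q)) = szero"
      using Pb in_fspan[OF h0(1) g] by blast
    have eb: "e b j = 0" if "j < k" for j by (rule forced[OF lap0 that])
    show "b = A"
    proof
      fix j show "b j = A j"
      proof (induction j)
        case 0 then show ?case using Pb A0 by simp
      next
        case (Suc j)
        show ?case
        proof (cases "j < k")
          case True
          have d: "dd n q (Suc j) = - (4 * real (Suc j) * (real n - real q - real j))" by (simp add: dd_def algebra_simps)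
          have nz: "4 * real (Suc j) * (real n - real q - real j) \<noteq> 0" using den[OF True] by simp
          have "b (Suc j) = b j * cc m p (k - j) / (4 * real (Suc j) * (real n - real q - real j))"
            using eb[OF True] nz unfolding e_def d by (simp add: field_simps)
          then show ?thesis using Suc.IH True by (simp add: A_def)
        next
          case False
          then have "b (Suc j) = 0" using Pb by simp
          then show ?thesis using False by (simp add: A_def)
        qed
      qed
    qed
  qed
qed


end
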